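(* Let $L$ be a finite-dimensional simple regular Lie algebra of rank $1$ over an infinite field $K$, admitting a nondegenerate symmetric invariant bilinear form. Then every element of $L$ is a commutator, i.e. for every $x\in L$ there exist $y,z\in L$ with $x=[y,z]$.
   Context: For $x\in L$ write $\chi_{\operatorname{ad} x}(t)=\det(t-\operatorname{ad}x)=\sum_{i}a_i(x)t^i$; the rank $\operatorname{rk}L$ is the minimal $r$ with $a_r(x)\neq0$ for some $x$; $x$ is regular if $a_{\operatorname{rk}L}(x)\neq 0$; $L$ is regular if every nonzero element is regular. A bilinear form is invariant if $\langle[x,y],z\rangle=\langle x,[y,z]\rangle$ for all $x,y,z$. *)

theory Defs
  imports "Jordan_Normal_Form.Char_Poly"
begin

text \<open>A finite-dimensional Lie algebra over a field K is modelled (up to isomorphism)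
 as K^n = carrier_vec n together with a bracket br.\<close>

definition lie_algebra :: "nat \<Rightarrow> ('k::field vec \<Rightarrow> 'k vec \<Rightarrow> 'k vec) \<Rightarrow> bool" where
  "lie_algebra n br \<longleftrightarrow>
    (\<forall>x\<in>carrier_vec n. \<forall>y\<in>carrier_vec n. br x y \<in> carrier_vec n) \<and>
    (\<forall>a. \<forall>x\<in>carrier_vec n. \<forall>y\<in>carrier_vec n. \<forall>z\<in>carrier_vec n.
        br (a \<cdot>\<^sub>v x + y) z = a \<cdot>\<^sub>v br x z + br y z \<and>
        br z (a \<cdot>\<^sub>v x + y) = a \<cdot>\<^sub>v br z x + br z y) \<and>
    (\<forall>x\<in>carrier_vec n. br x x = 0\<^sub>v n) \<and>
    (\<forall>x\<in>carrier_vec n. \<forall>y\<in>carrier_vec n. \<forall>z\<in>carrier_vec n.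
        br x (br y z) + br y (br z x) + br z (br x y) = 0\<^sub>v n)"

definition lie_ideal :: "nat \<Rightarrow> ('k::field vec \<Rightarrow> 'k vec \<Rightarrow> 'k vec) \<Rightarrow> 'k vec set \<Rightarrow> bool" where
  "lie_ideal n br I \<longleftrightarrow> I \<subseteq> carrier_vec n \<and> 0\<^sub>v n \<in> I \<and>
    (\<forall>x\<in>I. \<forall>y\<in>I. x + y \<in> I) \<and> (\<forall>a. \<forall>x\<in>I. a \<cdot>\<^sub>v x \<in> I) \<and>
    (\<forall>x\<in>carrier_vec n. \<forall>y\<in>I. br x y \<in> I)"

definition simple_lie :: "nat \<Rightarrow> ('k::field vec \<Rightarrow> 'k vec \<Rightarrow> 'k vec) \<Rightarrow> bool" where
  "simple_lie n br \<longleftrightarrow> lie_algebra n br \<and>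
    (\<exists>x\<in>carrier_vec n. \<exists>y\<in>carrier_vec n. br x y \<noteq> 0\<^sub>v n) \<and>
    (\<forall>I. lie_ideal n br I \<longrightarrow> I = {0\<^sub>v n} \<or> I = carrier_vec n)"

definition ad_mat :: "nat \<Rightarrow> ('k::field vec \<Rightarrow> 'k vec \<Rightarrow> 'k vec) \<Rightarrow> 'k vec \<Rightarrow> 'k mat" where
  "ad_mat n br x = mat n n (\<lambda>(i,j). br x (unit_vec n j) $ i)"

definition ad_char_poly :: "nat \<Rightarrow> ('k::field vec \<Rightarrow> 'k vec \<Rightarrow> 'k vec) \<Rightarrow> 'k vec \<Rightarrow> 'k poly" where
  "ad_char_poly n br x = char_poly (ad_mat n br x)"

definition lie_rank :: "nat \<Rightarrow> ('k::field vec \<Rightarrow> 'k vec \<Rightarrow> 'k vec) \<Rightarrow> nat" where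
  "lie_rank n br = (LEAST r. \<exists>x\<in>carrier_vec n. coeff (ad_char_poly n br x) r \<noteq> 0)"

definition regular_elem :: "nat \<Rightarrow> ('k::field vec \<Rightarrow> 'k vec \<Rightarrow> 'k vec) \<Rightarrow> 'k vec \<Rightarrow> bool" where
  "regular_elem n br x \<longleftrightarrow> coeff (ad_char_poly n br x) (lie_rank n br) \<noteq> 0"

definition regular_lie :: "nat \<Rightarrow> ('k::field vec \<Rightarrow> 'k vec \<Rightarrow> 'k vec) \<Rightarrow> bool" where
  "regular_lie n br \<longleftrightarrow> (\<forall>x\<in>carrier_vec n. x \<noteq> 0\<^sub>v n \<longrightarrow> regular_elem n br x)"

definition nondeg_sym_invariant_form ::
  "nat \<Rightarrow> ('k::field vec \<Rightarrow> 'k vec \<Rightarrow> 'k vec) \<Rightarrow> ('k vec \<Rightarrow> 'k vec \<Rightarrow> 'k) \<Rightarrow> bool" where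
  "nondeg_sym_invariant_form n br B \<longleftrightarrow>
    (\<forall>a. \<forall>x\<in>carrier_vec n. \<forall>y\<in>carrier_vec n. \<forall>z\<in>carrier_vec n.
        B (a \<cdot>\<^sub>v x + y) z = a * B x z + B y z \<and>
        B z (a \<cdot>\<^sub>v x + y) = a * B z x + B z y) \<and>
    (\<forall>x\<in>carrier_vec n. \<forall>y\<in>carrier_vec n. B x y = B y x) \<and>
    (\<forall>x\<in>carrier_vec n. \<forall>y\<in>carrier_vec n. \<forall>z\<in>carrier_vec n. B (br x y) z = B x (br y z)) \<and>
    (\<forall>x\<in>carrier_vec n. (\<forall>y\<in>carrier_vec n. B x y = 0) \<longrightarrow> x = 0\<^sub>v n)"

end

theory Submission imports Defs begin
lemma principal_minor:
  fixes A :: "'k::field mat"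
  assumes A: "A \<in> carrier_mat n n" and c: "coeff (char_poly A) 1 \<noteq> 0"
  shows "\<exists>i<n. det (mat_delete A i i) \<noteq> 0"
proof (rule ccontr)
  assume "\<not> ?thesis"
  hence d: "\<And>i. i < n \<Longrightarrow> det (mat_delete A i i) = 0" by auto
  have "\<And>i. i < n \<Longrightarrow> poly (char_poly (mat_delete A i i)) 0 = 0"
  proof -
    fix i assume i: "i < n"
    have M: "mat_delete A i i \<in> carrier_mat (n-1) (n-1)" using mat_delete_carrier[OF A] .
    from d[OF i] det_0_iff_vec_prod_zero_field[OF M] obtain v where
      v: "v \<in> carrier_vec (n-1)" "v \<noteq> 0\<^sub>v (n-1)" "mat_delete A i i *\<^sub>v v = 0\<^sub>v (n-1)" by blast
    have "eigenvector (mat_delete A i i) v 0" unfolding eigenvector_def using v M by auto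
    hence "eigenvalue (mat_delete A i i) 0" unfolding eigenvalue_def by blast
    thus "poly (char_poly (mat_delete A i i)) 0 = 0" using eigenvalue_root_char_poly[OF M] by blast
  qed
  hence "(\<Sum>i<n. poly (char_poly (mat_delete A i i)) 0) = 0" by simp
  hence "poly (pderiv (char_poly A)) 0 = 0" unfolding pderiv_char_poly[OF A] poly_sum .
  hence "coeff (pderiv (char_poly A)) 0 = 0" by (simp add: poly_0_coeff_0)
  thus False using c by (simp add: coeff_pderiv)
qed
lemma lin_expand:
  fixes F :: "'k::field vec \<Rightarrow> 'k vec"
  assumes closed: "\<And>x. x \<in> carrier_vec n \<Longrightarrow> F x \<in> carrier_vec m"
  and lin: "\<And>a x w. x \<in> carrier_vec n \<Longrightarrow> w \<in> carrier_vec n \<Longrightarrow> F (a \<cdot>\<^sub>v x + w) = a \<cdot>\<^sub>v F x + F w"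
  and z: "z \<in> carrier_vec n" and j: "j < m"
  shows "F z $ j = (\<Sum>l<n. F (unit_vec n l) $ j * z $ l)"
proof -
  have "F (0\<^sub>v n) = F (1 \<cdot>\<^sub>v 0\<^sub>v n + 0\<^sub>v n)" by simp
  also have "\<dots> = F (0\<^sub>v n) + F (0\<^sub>v n)" using lin[of "0\<^sub>v n" "0\<^sub>v n" 1] closed[of "0\<^sub>v n"] by simp
  finally have "F (0\<^sub>v n) $ j = F (0\<^sub>v n) $ j + F (0\<^sub>v n) $ j"
    using closed[of "0\<^sub>v n"] j by (metis carrier_vecD index_add_vec(1) zero_carrier_vec)
  hence F0: "F (0\<^sub>v n) $ j = 0" by (metis add_cancel_right_right)
  define zk where "zk k = vec n (\<lambda>l. if l < k then z $ l else 0)" for k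
  have zkc: "zk k \<in> carrier_vec n" for k unfolding zk_def by simp
  have "k \<le> n \<Longrightarrow> F (zk k) $ j = (\<Sum>l<k. F (unit_vec n l) $ j * z $ l)" for k
  proof (induction k)
    case 0
    have "zk 0 = 0\<^sub>v n" unfolding zk_def by (auto simp: zero_vec_def)
    then show ?case using F0 by simp
  next
    case (Suc k)
    have "zk (Suc k) = z $ k \<cdot>\<^sub>v unit_vec n k + zk k"
      using Suc.prems unfolding zk_def by (intro eq_vecI) (auto simp: less_Suc_eq)
    hence "F (zk (Suc k)) = z $ k \<cdot>\<^sub>v F (unit_vec n k) + F (zk k)"
      using lin zkc by simp
    hence "F (zk (Suc k)) $ j = z $ k * F (unit_vec n k) $ j + F (zk k) $ j"
      using closed[OF zkc[of k]] closed[of "unit_vec n k"] j by (simp add: carrier_vecD)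
    then show ?case using Suc by (simp add: mult.commute)
  qed
  moreover have "zk n = z" unfolding zk_def using z by (intro eq_vecI) auto
  ultimately show ?thesis by (metis order_refl)
qed

lemma ad_mat_mult:
  fixes br :: "'k::field vec \<Rightarrow> 'k vec \<Rightarrow> 'k vec"
  assumes L: "lie_algebra n br" and y: "y \<in> carrier_vec n" and z: "z \<in> carrier_vec n"
  shows "br y z = ad_mat n br y *\<^sub>v z"
proof (rule eq_vecI)
  have cl: "\<And>x. x \<in> carrier_vec n \<Longrightarrow> br y x \<in> carrier_vec n" using L y unfolding lie_algebra_def by blast
  have lin: "\<And>a x w. x \<in> carrier_vec n \<Longrightarrow> w \<in> carrier_vec n \<Longrightarrow> br y (a \<cdot>\<^sub>v x + w) = a \<cdot>\<^sub>v br y x + br y w"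
    using L y unfolding lie_algebra_def by blast
  show "dim_vec (br y z) = dim_vec (ad_mat n br y *\<^sub>v z)" using cl[OF z] by (simp add: ad_mat_def)
  fix j assume "j < dim_vec (ad_mat n br y *\<^sub>v z)"
  hence j: "j < n" by (simp add: ad_mat_def)
  show "br y z $ j = (ad_mat n br y *\<^sub>v z) $ j"
    using lin_expand[where F="br y" and n=n and m=n, OF cl lin z j] j z
    by (simp add: ad_mat_def mult_mat_vec_def scalar_prod_def atLeast0LessThan row_def)
qed

lemma solve_mod:
  fixes A :: "'k::field mat"
  assumes A: "A \<in> carrier_mat n n" and i: "i < n"
    and d: "det (mat_delete A i i) \<noteq> 0" and v: "v \<in> carrier_vec n"
  shows "\<exists>z\<in>carrier_vec n. \<forall>j<n. j \<noteq> i \<longrightarrow> (A *\<^sub>v z) $ j = v $ j"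
proof -
  define M where "M = mat_delete A i i"
  have M: "M \<in> carrier_mat (n-1) (n-1)" unfolding M_def using mat_delete_carrier[OF A] .
  have U: "M \<in> Units (ring_mat TYPE('k) (n-1) ())" by (rule det_non_zero_imp_unit[OF M]) (use d in \<open>simp add: M_def\<close>)
  obtain Bi where Bi: "mat_inverse M = Some Bi"
    using mat_inverse(1)[OF M, of "()"] U by (cases "mat_inverse M") auto
  from mat_inverse(2)[OF M Bi] have MB: "M * Bi = 1\<^sub>m (n-1)" and Bc: "Bi \<in> carrier_mat (n-1) (n-1)" by auto
  define v' where "v' = vec (n-1) (\<lambda>k. v $ insert_index i k)"
  define z' where "z' = Bi *\<^sub>v v'"
  have v'c: "v' \<in> carrier_vec (n-1)" unfolding v'_def by simp
  have z'c: "z' \<in> carrier_vec (n-1)" unfolding z'_def using Bc v'c by simp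
  have Mz': "M *\<^sub>v z' = v'" unfolding z'_def
    using assoc_mult_mat_vec[OF M Bc v'c, symmetric] MB v'c by simp
  define z where "z = vec n (\<lambda>j. if j = i then 0 else z' $ delete_index i j)"
  have zc: "z \<in> carrier_vec n" unfolding z_def by simp
  have "\<forall>j<n. j \<noteq> i \<longrightarrow> (A *\<^sub>v z) $ j = v $ j"
  proof (intro allI impI)
    fix j assume j: "j < n" and ji: "j \<noteq> i"
    define k where "k = delete_index i j"
    have jk: "insert_index i k = j" unfolding k_def using insert_delete_index[OF ji] .
    have k: "k < n - 1" unfolding k_def delete_index_def using j ji i by auto
    have img: "insert_index i ` {0..<n-1} = {0..<n} - {i}"
      using insert_index_image[of i "n-1"] i by simp
    have "(A *\<^sub>v z) $ j = (\<Sum>l\<in>{0..<n}. A $$ (j,l) * z $ l)"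
      using A j zc by (simp add: mult_mat_vec_def scalar_prod_def row_def)
    also have "\<dots> = (\<Sum>l\<in>{0..<n} - {i}. A $$ (j,l) * z $ l)"
      using i by (intro sum.mono_neutral_right) (auto simp: z_def)
    also have "\<dots> = (\<Sum>m\<in>{0..<n-1}. A $$ (j, insert_index i m) * z $ insert_index i m)"
      unfolding img[symmetric] by (subst sum.reindex) (auto simp: insert_index_inj_on)
    also have "\<dots> = (\<Sum>m\<in>{0..<n-1}. M $$ (k, m) * z' $ m)"
    proof (rule sum.cong[OF refl])
      fix m assume m: "m \<in> {0..<n-1}"
      have "insert_index i m < n" using m i unfolding insert_index_def by auto
      hence "z $ insert_index i m = z' $ m" unfolding z_def by simp
      moreover have "M $$ (k,m) = A $$ (j, insert_index i m)"
        unfolding M_def mat_delete_def using A k m jk by (auto simp: insert_index_def)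
      ultimately show "A $$ (j, insert_index i m) * z $ insert_index i m = M $$ (k, m) * z' $ m" by simp
    qed
    also have "\<dots> = (M *\<^sub>v z') $ k"
      using M k z'c by (simp add: mult_mat_vec_def scalar_prod_def row_def)
    also have "\<dots> = v $ j" unfolding Mz' v'_def using k jk by simp
    finally show "(A *\<^sub>v z) $ j = v $ j" .
  qed
  thus ?thesis using zc by blast
qed

lemma main_step:
  fixes br :: "'k::field vec \<Rightarrow> 'k vec \<Rightarrow> 'k vec"
  assumes L: "lie_algebra n br" and Fm: "nondeg_sym_invariant_form n br B"
  and n2: "2 \<le> n" and x: "x \<in> carrier_vec n"
  shows "\<exists>y\<in>carrier_vec n. y \<noteq> 0\<^sub>v n \<and> B y x = 0"
proof -
  have Blin1: "\<And>a u v w. u \<in> carrier_vec n \<Longrightarrow> v \<in> carrier_vec n \<Longrightarrow> w \<in> carrier_vec n \<Longrightarrow> B (a \<cdot>\<^sub>v u + v) w = a * B u w + B v w"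
    using Fm unfolding nondeg_sym_invariant_form_def by simp
  have B0: "B (0\<^sub>v n) w = 0" if w: "w \<in> carrier_vec n" for w
  proof -
    have "B (1 \<cdot>\<^sub>v 0\<^sub>v n + 0\<^sub>v n) w = 1 * B (0\<^sub>v n) w + B (0\<^sub>v n) w"
      using Blin1[OF zero_carrier_vec zero_carrier_vec w] .
    moreover have "1 \<cdot>\<^sub>v 0\<^sub>v n + 0\<^sub>v n = (0\<^sub>v n :: 'k vec)" by simp
    ultimately show ?thesis by (metis add_cancel_right_right mult_1)
  qed
  have Bh: "u \<in> carrier_vec n \<Longrightarrow> w \<in> carrier_vec n \<Longrightarrow> B (a \<cdot>\<^sub>v u) w = a * B u w" for a u w
    using Blin1[of u "0\<^sub>v n" w a] B0 by simp
  define e0 where "e0 = (unit_vec n 0 :: 'k vec)"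
  define e1 where "e1 = (unit_vec n 1 :: 'k vec)"
  have e: "e0 \<in> carrier_vec n" "e1 \<in> carrier_vec n" unfolding e0_def e1_def by auto
  show ?thesis
  proof (cases "B e0 x = 0")
    case True
    moreover have "e0 \<noteq> 0\<^sub>v n" using n2 unfolding e0_def
      by (metis index_unit_vec(1) index_zero_vec(1) less_le_trans pos2 zero_neq_one)
    ultimately show ?thesis using e by blast
  next
    case False
    define y where "y = B e1 x \<cdot>\<^sub>v e0 + (- B e0 x) \<cdot>\<^sub>v e1"
    have yc: "y \<in> carrier_vec n" unfolding y_def using e by simp
    have "B y x = B e1 x * B e0 x + (- B e0 x) * B e1 x"
      unfolding y_def using Blin1[of e0 "(- B e0 x) \<cdot>\<^sub>v e1" x "B e1 x"] Bh[of e1 x "- B e0 x"] e x by simp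
    hence "B y x = 0" by simp
    moreover have "y $ 1 = - B e0 x" unfolding y_def e0_def e1_def using n2 by simp
    hence "y \<noteq> 0\<^sub>v n" using False n2 by auto
    ultimately show ?thesis using yc by blast
  qed
qed


lemma n_ge_2:
  fixes br :: "'k::field vec \<Rightarrow> 'k vec \<Rightarrow> 'k vec"
  assumes S: "simple_lie n br"
  shows "2 \<le> n"
proof (rule ccontr)
  assume "\<not> 2 \<le> n"
  hence n: "n = 0 \<or> n = 1" by auto
  have L: "lie_algebra n br" using S unfolding simple_lie_def by simp
  obtain p q where p: "p \<in> carrier_vec n" and q: "q \<in> carrier_vec n" and pq: "br p q \<noteq> 0\<^sub>v n"
    using S unfolding simple_lie_def by blast
  have cl: "\<And>u v. u \<in> carrier_vec n \<Longrightarrow> v \<in> carrier_vec n \<Longrightarrow> br u v \<in> carrier_vec n"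
    using L unfolding lie_algebra_def by simp
  have lin1: "\<And>a u v w. u \<in> carrier_vec n \<Longrightarrow> v \<in> carrier_vec n \<Longrightarrow> w \<in> carrier_vec n \<Longrightarrow> br (a \<cdot>\<^sub>v u + v) w = a \<cdot>\<^sub>v br u w + br v w"
    using L unfolding lie_algebra_def by simp
  have lin2: "\<And>a u v w. u \<in> carrier_vec n \<Longrightarrow> v \<in> carrier_vec n \<Longrightarrow> w \<in> carrier_vec n \<Longrightarrow> br w (a \<cdot>\<^sub>v u + v) = a \<cdot>\<^sub>v br w u + br w v"
    using L unfolding lie_algebra_def by simp
  have alt: "\<And>u. u \<in> carrier_vec n \<Longrightarrow> br u u = 0\<^sub>v n"
    using L unfolding lie_algebra_def by simp
  show False
  proof (cases "n = 0")
    case True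
    have "br p q = 0\<^sub>v n" using cl[OF p q] True by (intro eq_vecI) auto
    with pq show False by simp
  next
    case False
    with n have n1: "n = 1" by simp
    define e where "e = (unit_vec n 0 :: 'k vec)"
    have ec: "e \<in> carrier_vec n" unfolding e_def by simp
    have pe: "p = p $ 0 \<cdot>\<^sub>v e + 0\<^sub>v n" using p n1 unfolding e_def by (intro eq_vecI) auto
    have qe: "q = q $ 0 \<cdot>\<^sub>v e + 0\<^sub>v n" using q n1 unfolding e_def by (intro eq_vecI) auto
    have "br e q = q $ 0 \<cdot>\<^sub>v br e e + br e (0\<^sub>v n)"
      using lin2[OF ec zero_carrier_vec ec] qe by metis
    moreover have "q $ 0 \<cdot>\<^sub>v 0\<^sub>v n + br e (0\<^sub>v n) = br e (0\<^sub>v n)"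
      using cl[OF ec zero_carrier_vec] by (intro eq_vecI) auto
    ultimately have beq: "br e q = br e (0\<^sub>v n)" using alt[OF ec] by simp
    have "br e (0\<^sub>v n) = 1 \<cdot>\<^sub>v br e (0\<^sub>v n) + br e (0\<^sub>v n)"
      using lin2[OF zero_carrier_vec zero_carrier_vec ec, of 1] by simp
    hence "br e (0\<^sub>v n) = 0\<^sub>v n" using cl[OF ec zero_carrier_vec]
      by (intro eq_vecI) (auto, metis add_cancel_right_right carrier_vecD index_add_vec(1) index_smult_vec(1) mult_1)
    hence beq0: "br e q = 0\<^sub>v n" using beq by simp
    have "br (0\<^sub>v n) q = 1 \<cdot>\<^sub>v br (0\<^sub>v n) q + br (0\<^sub>v n) q"
      using lin1[OF zero_carrier_vec zero_carrier_vec q, of 1] by simp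
    hence b0q: "br (0\<^sub>v n) q = 0\<^sub>v n" using cl[OF zero_carrier_vec q]
      by (intro eq_vecI) (auto, metis add_cancel_right_right carrier_vecD index_add_vec(1) index_smult_vec(1) mult_1)
    have "br p q = p $ 0 \<cdot>\<^sub>v br e q + br (0\<^sub>v n) q"
      using lin1[OF ec zero_carrier_vec q] pe by metis
    moreover have "p $ 0 \<cdot>\<^sub>v (0\<^sub>v n :: 'k vec) = 0\<^sub>v n" by (intro eq_vecI) auto
    ultimately have "br p q = 0\<^sub>v n" using beq0 b0q by simp
    with pq show False by simp
  qed
qed

theorem lemma12:
  fixes n :: nat and br :: "'k::field vec \<Rightarrow> 'k vec \<Rightarrow> 'k vec"
  assumes "infinite (UNIV :: 'k set)"
    and "simple_lie n br"
    and "regular_lie n br"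
    and "lie_rank n br = 1"
    and "\<exists>B. nondeg_sym_invariant_form n br B"
  shows "\<forall>x\<in>carrier_vec n. \<exists>y\<in>carrier_vec n. \<exists>z\<in>carrier_vec n. x = br y z"
proof
  fix x :: "'k vec" assume x: "x \<in> carrier_vec n"
  obtain B where Fm: "nondeg_sym_invariant_form n br B" using assms(5) by blast
  have L: "lie_algebra n br" using assms(2) unfolding simple_lie_def by simp
  have n2: "2 \<le> n" using n_ge_2[OF assms(2)] .
  have Blin2: "\<And>a u v w. u \<in> carrier_vec n \<Longrightarrow> v \<in> carrier_vec n \<Longrightarrow> w \<in> carrier_vec n \<Longrightarrow> B w (a \<cdot>\<^sub>v u + v) = a * B w u + B w v"
    using Fm unfolding nondeg_sym_invariant_form_def by simp
  have Blin1: "\<And>a u v w. u \<in> carrier_vec n \<Longrightarrow> v \<in> carrier_vec n \<Longrightarrow> w \<in> carrier_vec n \<Longrightarrow> B (a \<cdot>\<^sub>v u + v) w = a * B u w + B v w"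
    using Fm unfolding nondeg_sym_invariant_form_def by simp
  have Binv: "\<And>u v w. u \<in> carrier_vec n \<Longrightarrow> v \<in> carrier_vec n \<Longrightarrow> w \<in> carrier_vec n \<Longrightarrow> B (br u v) w = B u (br v w)"
    using Fm unfolding nondeg_sym_invariant_form_def by simp
  have Bnd: "\<And>u. u \<in> carrier_vec n \<Longrightarrow> (\<forall>v\<in>carrier_vec n. B u v = 0) \<Longrightarrow> u = 0\<^sub>v n"
    using Fm unfolding nondeg_sym_invariant_form_def by simp
  have alt: "\<And>u. u \<in> carrier_vec n \<Longrightarrow> br u u = 0\<^sub>v n"
    using L unfolding lie_algebra_def by simp
  have B0: "B (0\<^sub>v n) w = 0" if w: "w \<in> carrier_vec n" for w
  proof -
    have "B (1 \<cdot>\<^sub>v 0\<^sub>v n + 0\<^sub>v n) w = 1 * B (0\<^sub>v n) w + B (0\<^sub>v n) w"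
      using Blin1[OF zero_carrier_vec zero_carrier_vec w] .
    moreover have "1 \<cdot>\<^sub>v 0\<^sub>v n + 0\<^sub>v n = (0\<^sub>v n :: 'k vec)" by simp
    ultimately show ?thesis by (metis add_cancel_right_right mult_1)
  qed
  obtain y where y: "y \<in> carrier_vec n" and y0: "y \<noteq> 0\<^sub>v n" and Byx: "B y x = 0"
    using main_step[OF L Fm n2 x] by blast
  define A where "A = ad_mat n br y"
  have A: "A \<in> carrier_mat n n" unfolding A_def ad_mat_def by simp
  have "regular_elem n br y" using assms(3) y y0 unfolding regular_lie_def by blast
  hence "coeff (char_poly A) 1 \<noteq> 0" using assms(4) unfolding regular_elem_def ad_char_poly_def A_def by simp
  then obtain i where i: "i < n" and d: "det (mat_delete A i i) \<noteq> 0"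
    using principal_minor[OF A] by blast
  define ei where "ei = (unit_vec n i :: 'k vec)"
  have eic: "ei \<in> carrier_vec n" unfolding ei_def by simp
  have key: "\<exists>z\<in>carrier_vec n. \<exists>c. br y z = c \<cdot>\<^sub>v ei + v" if v: "v \<in> carrier_vec n" for v
  proof -
    obtain z where z: "z \<in> carrier_vec n" and zj: "\<forall>j<n. j \<noteq> i \<longrightarrow> (A *\<^sub>v z) $ j = v $ j"
      using solve_mod[OF A i d v] by blast
    have bz: "br y z = A *\<^sub>v z" unfolding A_def using ad_mat_mult[OF L y z] .
    define c where "c = (A *\<^sub>v z) $ i - v $ i"
    have "br y z = c \<cdot>\<^sub>v ei + v"
      unfolding bz
    proof (rule eq_vecI)
      show "dim_vec (A *\<^sub>v z) = dim_vec (c \<cdot>\<^sub>v ei + v)" using A v eic by simp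
      fix j assume "j < dim_vec (c \<cdot>\<^sub>v ei + v)"
      hence j: "j < n" using v by simp
      show "(A *\<^sub>v z) $ j = (c \<cdot>\<^sub>v ei + v) $ j"
        using zj j v i unfolding ei_def c_def by (cases "j = i") auto
    qed
    thus ?thesis using z by blast
  qed
  have fz: "B y (br y z) = 0" if z: "z \<in> carrier_vec n" for z
    using Binv[OF y y z] alt[OF y] B0[OF z] by simp
  have fe: "B y ei \<noteq> 0"
  proof
    assume h: "B y ei = 0"
    have "\<forall>v\<in>carrier_vec n. B y v = 0"
    proof
      fix v :: "'k vec" assume v: "v \<in> carrier_vec n"
      obtain z c where z: "z \<in> carrier_vec n" and zc: "br y z = c \<cdot>\<^sub>v ei + v" using key[OF v] by blast
      have "0 = B y (c \<cdot>\<^sub>v ei + v)" using fz[OF z] zc by simp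
      also have "\<dots> = c * B y ei + B y v" using Blin2[OF eic v y] .
      finally show "B y v = 0" using h by simp
    qed
    with Bnd[OF y] y0 show False by simp
  qed
  obtain z c where z: "z \<in> carrier_vec n" and zc: "br y z = c \<cdot>\<^sub>v ei + x" using key[OF x] by blast
  have "0 = B y (c \<cdot>\<^sub>v ei + x)" using fz[OF z] zc by simp
  also have "\<dots> = c * B y ei + B y x" using Blin2[OF eic x y] .
  finally have "c = 0" using Byx fe by simp
  moreover have "0 \<cdot>\<^sub>v ei + x = x" using x eic by (intro eq_vecI) auto
  ultimately have "x = br y z" using zc by simp
  thus "\<exists>y\<in>carrier_vec n. \<exists>z\<in>carrier_vec n. x = br y z" using y z by blast
qed

end
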